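(* Let $\mathcal{A}$ be an $[n_a,k_a]_q$ cyclic code and let $\mathcal{B}$ be an $[n_b,n_b-1]_q$ single parity check code (minimum distance $d_b=2$), with $\gcd(n_a,n_b)=1$. Let $\alpha$ be an element of order $n_a$ in $\mathbb{F}_{q^{s_a}}$, $\beta$ an element of order $n_b$ in $\mathbb{F}_{q^{s_b}}$, $s=\mathrm{lcm}(s_a,s_b)$, and let $f_1,f_2,m_1,m_2,\delta,\nu$ be integers with $m_1\neq0$, $m_2\neq0$, $\gcd(n_a,m_1)=\gcd(n_b,m_2)=1$, $\delta\ge 2$, $\nu>0$, such that $$\sum_{i=0}^{\infty} a(\alpha^{f_1+im_1+j})\, b(\beta^{f_2+im_2+j})X^i\equiv 0 \bmod X^{\delta-1}\quad\text{for all } j=0,\dots,\nu$$ holds for all $a(X)\in\mathcal{A}$, $b(X)\in\mathcal{B}$. Let $b(X)\in\mathcal{B}$ be a codeword of weight $2$. Let $r(X)=a(X)+e(X)$ with $a(X)\in\mathcal{A}$ and error $e(X)=\sum_{i\in\mathsf{E}}e_iX^i\in\mathbb{F}_q[X]$, where $\mathsf{E}=\{j_1,\dots,j_t\}\subseteq\{0,\dots,n_a-1\}$, $|\mathsf{E}|=t$, $e_i\neq 0$ for $i\in\mathsf{E}$, and $$t\leq \frac{\delta+\nu-1}{2d_b}=\frac{\delta+\nu-1}{4}.$$ For $j=0,\dots,\nu$ define the syndromes $S^{(j)}_i = e(\alpha^{f_1+im_1+j})\, b(\beta^{f_2+im_2+j})\in\mathbb{F}_{q^s}$ for $i=0,\dots,\delta-2$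 (equivalently, the coefficients of $\sum_{i\ge0} r(\alpha^{f_1+im_1+j})b(\beta^{f_2+im_2+j})X^i \bmod X^{\delta-1}$), let $\mathbf{S}^{(j)}$ be the $(\delta-1-2t)\times 2t$ matrix whose entry in row $u$ and column $v$ ($u=0,\dots,\delta-2-2t$, $v=0,\dots,2t-1$) is $S^{(j)}_{u+v}$, and let $\mathbf{S}$ be the matrix obtained by stacking $\mathbf{S}^{(0)},\mathbf{S}^{(1)},\dots,\mathbf{S}^{(\nu)}$ vertically. Then $\operatorname{rank}(\mathbf{S})=2t$.
   Context: A cyclic $[n,k]_q$ code is an ideal of $\mathbb{F}_q[X]/(X^n-1)$; codewords are identified with polynomials of degree less than $n$, and $c(\gamma)$ denotes evaluation at $\gamma$ in an extension field. A single parity check code of length $n_b$ is the code of all vectors in $\mathbb{F}_q^{n_b}$ whose coordinates sum to zero. The matrix $\mathbf{S}$ is the coefficient matrix of the joint key equations $\Omega^{(j)}(X)\equiv\Lambda(X)S^{(j)}(X)\bmod X^{\delta-1}$ for an error-locator polynomial $\Lambda$ of degree $2t$.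
   Formalization: The error weight t also satisfies 2t < delta - 1 besides t <= (delta+nu-1)/4, so every block $\mathbf{S}^{(j)}$ has at least one row. The statement above fails without it. *)

theory Defs
  imports "HOL-Computational_Algebra.Polynomial" "Jordan_Normal_Form.DL_Rank"
begin

definition xn_minus_1 :: "nat \<Rightarrow> 'a::comm_ring_1 poly" where
  "xn_minus_1 n = monom 1 n - 1"

text \<open>A cyclic code of length n: an ideal of F[X]/(X^n-1), codewords
  identified with their representatives of degree less than n.\<close>
definition cyclic_code :: "nat \<Rightarrow> 'a::field poly set \<Rightarrow> bool" where
  "cyclic_code n C \<longleftrightarrow> 0 < n \<and> (\<forall>c\<in>C. degree c < n) \<and> 0 \<in> C \<and>
     (\<forall>a\<in>C. \<forall>b\<in>C. a + b \<in> C) \<and>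
     (\<forall>g. \<forall>c\<in>C. (g * c) mod xn_minus_1 n \<in> C)"

definition code_dim :: "'a::{finite,field} poly set \<Rightarrow> nat \<Rightarrow> bool" where
  "code_dim C k \<longleftrightarrow> card C = card (UNIV :: 'a set) ^ k"

definition spc_code :: "nat \<Rightarrow> 'a::field poly set" where
  "spc_code n = {p. degree p < n \<and> (\<Sum>i<n. coeff p i) = 0}"

definition hweight :: "'a::zero poly \<Rightarrow> nat" where
  "hweight p = card {i. coeff p i \<noteq> 0}"

definition has_order :: "'a::field \<Rightarrow> nat \<Rightarrow> bool" where
  "has_order x n \<longleftrightarrow> 0 < n \<and> x ^ n = 1 \<and> (\<forall>k. 0 < k \<and> k < n \<longrightarrow> x ^ k \<noteq> 1)"

definition mat_rank :: "'a::field mat \<Rightarrow> nat" where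
  "mat_rank A = vec_space.rank (dim_row A) A"

text \<open>Stacked syndrome matrix: blocks S^(0),...,S^(nu), each an L x w Hankel
  matrix with entries Syn j (u+v); row index r = j*L + u.\<close>
definition stacked_hankel :: "(nat \<Rightarrow> nat \<Rightarrow> 'a::field) \<Rightarrow> nat \<Rightarrow> nat \<Rightarrow> nat \<Rightarrow> 'a mat" where
  "stacked_hankel Syn nu L w =
     mat ((nu + 1) * L) w (\<lambda>(r, v). Syn (r div L) (r mod L + v))"

end

theory Submission
  imports Defs
begin


lemma rank_full_if_ker_trivial:
  fixes A :: "'a::field mat"
  assumes A: "A \<in> carrier_mat n nc"
    and ker: "\<And>v. v \<in> carrier_vec nc \<Longrightarrow> A *\<^sub>v v = 0\<^sub>v n \<Longrightarrow> v = 0\<^sub>v nc"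
  shows "mat_rank A = nc"
proof -
  have dn: "dim_row A = n" "dim_col A = nc" using A by auto
  have dist: "distinct (cols A)"
  proof (rule ccontr)
    assume "\<not> distinct (cols A)"
    then obtain i j where ij: "i < nc" "j < nc" "i \<noteq> j" "col A i = col A j"
      unfolding distinct_conv_nth using dn by (auto simp: cols_def)
    define v :: "'a vec" where "v = vec nc (\<lambda>k. if k = i then 1 else if k = j then -1 else 0)"
    have vc: "v \<in> carrier_vec nc" by (simp add: v_def)
    have "A *\<^sub>v v = 0\<^sub>v n"
    proof (rule eq_vecI)
      fix r assume r: "r < dim_vec (0\<^sub>v n :: 'a vec)"
      hence rn: "r < n" by simp
      have "(A *\<^sub>v v) $ r = (\<Sum>k\<in>{0..<nc}. A $$ (r,k) * v $ k)"
        using rn dn by (simp add: mult_mat_vec_def scalar_prod_def row_def v_def)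
      also have "\<dots> = (\<Sum>k\<in>{0..<nc}. (if k = i then A $$ (r,k) else 0) + (if k = j then - A $$ (r,k) else 0))"
        by (rule sum.cong) (auto simp: v_def ij)
      also have "\<dots> = A $$ (r,i) - A $$ (r,j)"
        using ij by (simp add: sum.distrib)
      also have "\<dots> = 0"
      proof -
        have "col A i $ r = col A j $ r" using ij by simp
        moreover have "col A i $ r = A $$ (r,i)" "col A j $ r = A $$ (r,j)"
          using rn dn ij(1,2) by simp_all
        ultimately show ?thesis by simp
      qed
      finally show "(A *\<^sub>v v) $ r = 0\<^sub>v n $ r" using rn by simp
    qed (simp add: dn)
    hence "v = 0\<^sub>v nc" using ker vc by blast
    hence "v $ i = 0" using ij by simp
    thus False using ij by (simp add: v_def)
  qed
  interpret vs: vec_space "TYPE('a)" n .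
  have li: "\<not> vs.lin_dep (set (cols A))"
  proof
    assume "vs.lin_dep (set (cols A))"
    then obtain v where "v \<in> carrier_vec nc" "v \<noteq> 0\<^sub>v nc" "A *\<^sub>v v = 0\<^sub>v n"
      using vs.lin_depE[OF A _ dist] by blast
    thus False using ker by blast
  qed
  show ?thesis unfolding mat_rank_def dn(1)
    using vs.lin_indpt_full_rank[OF A dist li] .
qed


lemma box_kernel:
  fixes Z w lam :: "'i \<Rightarrow> 'a::field"
  assumes "finite K"
  shows "inj_on Z K \<Longrightarrow> inj_on w K \<Longrightarrow> card K \<le> L + \<nu> \<Longrightarrow> 1 \<le> L \<Longrightarrow>
    (\<And>u j. u < L \<Longrightarrow> j \<le> \<nu> \<Longrightarrow> (\<Sum>k\<in>K. lam k * w k ^ j * Z k ^ u) = 0) \<Longrightarrow>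
    \<forall>k\<in>K. lam k = 0"
  using assms
proof (induction K arbitrary: L \<nu> lam rule: finite_induct)
  case empty
  then show ?case by simp
next
  case (insert x F)
  note IZ = insert.prems(1) and IW = insert.prems(2) and crd = insert.prems(3)
    and L1 = insert.prems(4) and S = insert.prems(5)
  have restF: "\<forall>k\<in>F. lam k = 0"
  proof (cases "F = {}")
    case True then show ?thesis by simp
  next
    case False
    hence cF: "card F \<ge> 1" using insert.hyps(1) by (simp add: Suc_leI card_gt_0_iff)
    have cI: "card (insert x F) = card F + 1" using insert.hyps by simp
    show ?thesis
    proof (cases "\<nu> \<ge> 1")
      case True
      define lam' where "lam' k = lam k * (w k - w x)" for k
      have "\<forall>k\<in>F. lam' k = 0"
      proof (rule insert.IH[of L "\<nu> - 1" lam'])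
        show "inj_on Z F" using IZ by (auto simp: inj_on_def)
        show "inj_on w F" using IW by (auto simp: inj_on_def)
        show "card F \<le> L + (\<nu> - 1)" using crd cI True by simp
        show "1 \<le> L" by fact
        fix u j assume u: "u < L" and j: "j \<le> \<nu> - 1"
        have "(\<Sum>k\<in>F. lam' k * w k ^ j * Z k ^ u) = (\<Sum>k\<in>insert x F. lam' k * w k ^ j * Z k ^ u)"
          using insert.hyps by (simp add: lam'_def)
        also have "\<dots> = (\<Sum>k\<in>insert x F. lam k * w k ^ (j+1) * Z k ^ u)
                      - w x * (\<Sum>k\<in>insert x F. lam k * w k ^ j * Z k ^ u)"
          by (simp add: lam'_def sum_distrib_left sum_subtractf[symmetric] algebra_simps)
        also have "\<dots> = 0" using S[of u "j+1"] S[of u j] u j True by simp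
        finally show "(\<Sum>k\<in>F. lam' k * w k ^ j * Z k ^ u) = 0" .
      qed
      moreover have "\<And>k. k \<in> F \<Longrightarrow> w k \<noteq> w x"
        using IW insert.hyps(2) by (auto simp: inj_on_def)
      ultimately show ?thesis by (auto simp: lam'_def)
    next
      case False
      hence nu0: "\<nu> = 0" by simp
      hence L2: "L \<ge> 2" using crd cI cF by simp
      define lam' where "lam' k = lam k * (Z k - Z x)" for k
      have "\<forall>k\<in>F. lam' k = 0"
      proof (rule insert.IH[of "L - 1" \<nu> lam'])
        show "inj_on Z F" using IZ by (auto simp: inj_on_def)
        show "inj_on w F" using IW by (auto simp: inj_on_def)
        show "card F \<le> (L - 1) + \<nu>" using crd cI by simp
        show "1 \<le> L - 1" using L2 by simp
        fix u j assume u: "u < L - 1" and j: "j \<le> \<nu>"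
        have "(\<Sum>k\<in>F. lam' k * w k ^ j * Z k ^ u) = (\<Sum>k\<in>insert x F. lam' k * w k ^ j * Z k ^ u)"
          using insert.hyps by (simp add: lam'_def)
        also have "\<dots> = (\<Sum>k\<in>insert x F. lam k * w k ^ j * Z k ^ (u+1))
                      - Z x * (\<Sum>k\<in>insert x F. lam k * w k ^ j * Z k ^ u)"
          by (simp add: lam'_def sum_distrib_left sum_subtractf[symmetric] algebra_simps)
        also have "\<dots> = 0" using S[of "u+1" j] S[of u j] u j by simp
        finally show "(\<Sum>k\<in>F. lam' k * w k ^ j * Z k ^ u) = 0" .
      qed
      moreover have "\<And>k. k \<in> F \<Longrightarrow> Z k \<noteq> Z x"
        using IZ insert.hyps(2) by (auto simp: inj_on_def)
      ultimately show ?thesis by (auto simp: lam'_def)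
    qed
  qed
  have "(\<Sum>k\<in>insert x F. lam k * w k ^ 0 * Z k ^ 0) = 0" using S[of 0 0] L1 by simp
  hence "lam x = 0" using restF insert.hyps by simp
  with restF show ?case by simp
qed


lemma main_abstract:
  fixes Z w c :: "'i \<Rightarrow> 'a::field" and K :: "'i set"
  assumes fin: "finite K" and iZ: "inj_on Z K" and iw: "inj_on w K"
    and cK: "card K = N" and NL: "N \<le> L + \<nu>" and L1: "1 \<le> L"
    and cnz: "\<And>k. k \<in> K \<Longrightarrow> c k \<noteq> 0"
    and Syn: "\<And>j i. Syn j i = (\<Sum>k\<in>K. c k * w k ^ j * Z k ^ i)"
  shows "mat_rank (stacked_hankel Syn \<nu> L N) = N"
proof (rule rank_full_if_ker_trivial)
  show "stacked_hankel Syn \<nu> L N \<in> carrier_mat ((\<nu>+1)*L) N"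
    by (simp add: stacked_hankel_def)
  fix v :: "'a vec" assume vc: "v \<in> carrier_vec N"
    and Av: "stacked_hankel Syn \<nu> L N *\<^sub>v v = 0\<^sub>v ((\<nu>+1)*L)"
  define mu where "mu k = (\<Sum>i<N. v $ i * Z k ^ i)" for k
  define lam where "lam k = c k * mu k" for k
  have S: "(\<Sum>k\<in>K. lam k * w k ^ j * Z k ^ u) = 0" if u: "u < L" and j: "j \<le> \<nu>" for u j
  proof -
    define r where "r = j * L + u"
    have rlt: "r < (\<nu>+1)*L"
    proof -
      have "j * L + u < j * L + L" using u by simp
      also have "\<dots> = (j+1) * L" by simp
      also have "\<dots> \<le> (\<nu>+1) * L" using j by (intro mult_right_mono) auto
      finally show ?thesis by (simp add: r_def)
    qed
    have rd: "r div L = j" "r mod L = u" using u by (simp_all add: r_def)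
    have "0 = (stacked_hankel Syn \<nu> L N *\<^sub>v v) $ r" using Av rlt by simp
    also have "\<dots> = (\<Sum>i\<in>{0..<N}. Syn j (u + i) * v $ i)"
      using rlt vc rd by (simp add: stacked_hankel_def mult_mat_vec_def scalar_prod_def)
    also have "\<dots> = (\<Sum>i\<in>{0..<N}. \<Sum>k\<in>K. c k * w k ^ j * Z k ^ u * (v $ i * Z k ^ i))"
      by (simp add: Syn sum_distrib_right sum_distrib_left power_add mult_ac)
    also have "\<dots> = (\<Sum>k\<in>K. c k * w k ^ j * Z k ^ u * mu k)"
      by (subst sum.swap) (simp add: mu_def sum_distrib_left lessThan_atLeast0)
    also have "\<dots> = (\<Sum>k\<in>K. lam k * w k ^ j * Z k ^ u)"
      by (simp add: lam_def mult_ac)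
    finally show ?thesis by simp
  qed
  have "\<forall>k\<in>K. lam k = 0"
    by (rule box_kernel[OF fin iZ iw _ L1 S]) (use cK NL in auto)
  hence mu0: "\<And>k. k \<in> K \<Longrightarrow> mu k = 0" using cnz by (auto simp: lam_def)
  show "v = 0\<^sub>v N"
  proof (cases "N = 0")
    case True thus ?thesis using vc by auto
  next
    case False
    define p where "p = (\<Sum>i<N. monom (v $ i) i)"
    have pe: "poly p x = (\<Sum>i<N. v $ i * x ^ i)" for x
      by (simp add: p_def poly_sum poly_monom)
    have degp: "degree p < N"
    proof -
      have "degree p \<le> N - 1"
        unfolding p_def by (rule degree_sum_le) (auto intro: order.trans[OF degree_monom_le])
      thus ?thesis using False by simp
    qed
    have cardA: "card (Z ` K) = N" using iZ cK by (simp add: card_image)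
    have "p = 0"
    proof (rule poly_eqI_degree[of "Z ` K"])
      fix x assume "x \<in> Z ` K"
      then obtain k where "k \<in> K" "x = Z k" by auto
      thus "poly p x = poly 0 x" using mu0 pe by (simp add: mu_def)
    qed (use cardA degp False in auto)
    hence cf: "coeff p i = 0" for i by simp
    have "coeff p i = v $ i" if "i < N" for i
      using that by (simp add: p_def coeff_sum coeff_monom)
    thus ?thesis using cf vc by (intro eq_vecI) auto
  qed
qed


lemma has_order_nz: "has_order (x::'a::field) n \<Longrightarrow> x \<noteq> 0"
  unfolding has_order_def by (metis power_0_left zero_neq_one not_gr0)

lemma powi_n_one:
  assumes "has_order (x::'a::field) n"
  shows "x powi (int n * k) = 1"
  using assms unfolding has_order_def by (simp add: power_int_mult)

lemma order_powi_one:
  assumes o: "has_order (x::'a::field) n" and d: "x powi d = 1"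
  shows "int n dvd d"
proof -
  have x0: "x \<noteq> 0" using has_order_nz[OF o] .
  have n0: "n > 0" using o by (simp add: has_order_def)
  have "d = int n * (d div int n) + d mod int n" by simp
  hence "x powi d = x powi (int n * (d div int n)) * x powi (d mod int n)"
    by (metis power_int_add x0)
  hence "x powi (d mod int n) = 1" using d powi_n_one[OF o] by simp
  moreover have "d mod int n \<ge> 0" "d mod int n < int n" using n0 by simp_all
  ultimately have "x ^ nat (d mod int n) = 1" "nat (d mod int n) < n"
    by (simp_all add: power_int_nonneg_exp)
  hence "nat (d mod int n) = 0" using o unfolding has_order_def by (metis not_gr0)
  hence "d mod int n = 0" using \<open>d mod int n \<ge> 0\<close> by simp
  thus ?thesis by (simp add: dvd_eq_mod_eq_0)
qed

lemma coprime_unit: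
  fixes z :: "'a::field"
  assumes "z \<noteq> 0" "z powi int a = 1" "z powi int b = 1" "gcd a b = 1"
  shows "z = 1"
proof -
  obtain u v where uv: "u * int a + v * int b = gcd (int a) (int b)"
    using bezout_int by blast
  hence uv1: "u * int a + v * int b = 1" using assms(4) by (simp add: gcd_int_def)
  have "z = z powi (u * int a + v * int b)" using uv1 by simp
  also have "\<dots> = z powi (int a * u) * z powi (int b * v)"
    using assms(1) by (simp add: power_int_add mult.commute)
  also have "\<dots> = 1" using assms(2,3) by (simp add: power_int_mult)
  finally show ?thesis .
qed

lemma dvd_small_int: "int n dvd d \<Longrightarrow> \<bar>d\<bar> < int n \<Longrightarrow> d = 0"
  by (cases "d = 0") (auto dest: dvd_imp_le_int)

lemma sep:
  fixes \<alpha> \<beta> :: "'a::field"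
  assumes oa: "has_order \<alpha> na" and ob: "has_order \<beta> nb" and cp: "gcd na nb = 1"
    and g1: "gcd (int na) m1 = 1" and g2: "gcd (int nb) m2 = 1"
    and p: "p < na" "p' < na" and l: "l < nb" "l' < nb"
    and eq: "\<alpha> powi (m1 * int p) * \<beta> powi (m2 * int l) = \<alpha> powi (m1 * int p') * \<beta> powi (m2 * int l')"
  shows "p = p' \<and> l = l'"
proof -
  have a0: "\<alpha> \<noteq> 0" using has_order_nz[OF oa] .
  have b0: "\<beta> \<noteq> 0" using has_order_nz[OF ob] .
  define z where "z = \<alpha> powi (m1 * (int p - int p'))"
  have z1: "z = \<alpha> powi (m1 * int p) / \<alpha> powi (m1 * int p')"
    unfolding z_def using a0 by (simp add: right_diff_distrib power_int_diff)
  have "\<alpha> powi (m1 * int p') * (z * \<beta> powi (m2 * int l)) = \<alpha> powi (m1 * int p') * \<beta> powi (m2 * int l')"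
  proof -
    have zz: "z * \<alpha> powi (m1 * int p') = \<alpha> powi (m1 * int p)" using z1 a0 by simp
    have "\<alpha> powi (m1 * int p') * (z * \<beta> powi (m2 * int l)) = (z * \<alpha> powi (m1 * int p')) * \<beta> powi (m2 * int l)"
      by (simp add: mult_ac)
    also have "\<dots> = \<alpha> powi (m1 * int p') * \<beta> powi (m2 * int l')" using zz eq by simp
    finally show ?thesis .
  qed
  hence "z * \<beta> powi (m2 * int l) = \<beta> powi (m2 * int l')" using a0 by simp
  hence z2: "z = \<beta> powi (m2 * int l') / \<beta> powi (m2 * int l)"
    using b0 by (simp add: field_simps)
  have z2': "z = \<beta> powi (m2 * (int l' - int l))"
    unfolding z2 using b0 by (simp add: right_diff_distrib power_int_diff)
  have z0: "z \<noteq> 0" using a0 by (simp add: z_def)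
  have "z powi int na = \<alpha> powi (int na * (m1 * (int p - int p')))"
    unfolding z_def by (simp add: power_int_power' mult.commute)
  hence za: "z powi int na = 1" using powi_n_one[OF oa] by simp
  have "z powi int nb = \<beta> powi (int nb * (m2 * (int l' - int l)))"
    unfolding z2' by (simp add: power_int_power' mult.commute)
  hence zb: "z powi int nb = 1" using powi_n_one[OF ob] by simp
  have "z = 1" using coprime_unit[OF z0 za zb cp] .
  have "int na dvd m1 * (int p - int p')"
    using order_powi_one[OF oa] \<open>z = 1\<close> z_def by simp
  hence "int na dvd (int p - int p')"
    using g1 by (metis coprime_dvd_mult_right_iff gcd_eq_1_imp_coprime)
  hence "int p - int p' = 0" by (rule dvd_small_int) (use p in auto)
  moreover have "int nb dvd m2 * (int l' - int l)"
    using order_powi_one[OF ob] \<open>z = 1\<close> z2' by simp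
  hence "int nb dvd (int l' - int l)"
    using g2 by (metis coprime_dvd_mult_right_iff gcd_eq_1_imp_coprime)
  hence "int l' - int l = 0" by (rule dvd_small_int) (use l in auto)
  ultimately show ?thesis by simp
qed


lemma poly_map_sum:
  fixes emb :: "'k::comm_ring_1 \<Rightarrow> 'K::comm_ring_1"
  assumes e0: "emb 0 = 0" and fin: "finite S" and sub: "{i. coeff q i \<noteq> 0} \<subseteq> S"
  shows "poly (map_poly emb q) y = (\<Sum>i\<in>S. emb (coeff q i) * y ^ i)"
proof -
  let ?q = "map_poly emb q"
  let ?T = "{..degree ?q} \<union> S"
  have cq: "coeff ?q i = emb (coeff q i)" for i by (simp add: coeff_map_poly e0)
  have "poly ?q y = (\<Sum>i\<le>degree ?q. coeff ?q i * y ^ i)" by (rule poly_altdef)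
  also have "\<dots> = (\<Sum>i\<in>?T. coeff ?q i * y ^ i)"
    by (rule sum.mono_neutral_left) (auto simp: fin coeff_eq_0)
  also have "\<dots> = (\<Sum>i\<in>S. coeff ?q i * y ^ i)"
  proof (rule sum.mono_neutral_right)
    show "\<forall>i\<in>?T - S. coeff ?q i * y ^ i = 0"
    proof
      fix i assume "i \<in> ?T - S"
      hence "coeff q i = 0" using sub by blast
      thus "coeff ?q i * y ^ i = 0" by (simp add: cq e0)
    qed
  qed (use fin in auto)
  finally show ?thesis by (simp add: cq)
qed

lemma powi_split:
  fixes x :: "'a::field"
  assumes "x \<noteq> 0"
  shows "(x powi (f + int i * m + int j)) ^ p = x powi (f * int p) * (x powi (m * int p)) ^ i * (x ^ p) ^ j"
proof -
  have "(x powi (f + int i * m + int j)) ^ p = x powi ((f + int i * m + int j) * int p)"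
    by (simp add: power_int_power')
  also have "(f + int i * m + int j) * int p = f * int p + (m * int p) * int i + int p * int j"
    by (simp add: algebra_simps)
  also have "x powi (f * int p + (m * int p) * int i + int p * int j)
      = x powi (f * int p) * x powi ((m * int p) * int i) * x powi (int p * int j)"
    using assms by (simp add: power_int_add)
  also have "\<dots> = x powi (f * int p) * (x powi (m * int p)) ^ i * (x ^ p) ^ j"
    by (simp add: power_int_power' power_int_power[symmetric] power_mult)
  finally show ?thesis .
qed

theorem theorem7:
  fixes A :: "'k::{finite,field} poly set"
    and emb :: "'k \<Rightarrow> 'K::{finite,field}"
    and na ka nb sa sb \<delta> \<nu> t :: nat
    and \<alpha> \<beta> :: 'K
    and f1 f2 m1 m2 :: int
    and a b e :: "'k poly"
    and E :: "nat set"
  assumes emb_inj: "inj emb"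
    and emb_add: "\<And>x y. emb (x + y) = emb x + emb y"
    and emb_mult: "\<And>x y. emb (x * y) = emb x * emb y"
    and emb_one: "emb 1 = 1"
    and A_cyclic: "cyclic_code na A" and A_dim: "code_dim A ka"
    and nb_ge: "nb \<ge> 2"
    and coprime_n: "gcd na nb = 1"
    and sa_pos: "sa > 0" and sb_pos: "sb > 0"
    and K_card: "card (UNIV :: 'K set) = card (UNIV :: 'k set) ^ lcm sa sb"
    and \<alpha>_sub: "\<alpha> ^ (card (UNIV :: 'k set) ^ sa) = \<alpha>" and \<alpha>_ord: "has_order \<alpha> na"
    and \<beta>_sub: "\<beta> ^ (card (UNIV :: 'k set) ^ sb) = \<beta>" and \<beta>_ord: "has_order \<beta> nb"
    and m1_nz: "m1 \<noteq> 0" and m2_nz: "m2 \<noteq> 0"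
    and gcd_m1: "gcd (int na) m1 = 1" and gcd_m2: "gcd (int nb) m2 = 1"
    and \<delta>_ge: "\<delta> \<ge> 2" and \<nu>_pos: "\<nu> > 0"
    and key: "\<And>a' b' j i. a' \<in> A \<Longrightarrow> b' \<in> spc_code nb \<Longrightarrow> j \<le> \<nu> \<Longrightarrow> i < \<delta> - 1 \<Longrightarrow>
        poly (map_poly emb a') (\<alpha> powi (f1 + int i * m1 + int j)) *
        poly (map_poly emb b') (\<beta> powi (f2 + int i * m2 + int j)) = 0"
    and b_code: "b \<in> spc_code nb" and b_weight: "hweight b = 2"
    and a_code: "a \<in> A"
    and E_sub: "E \<subseteq> {0..<na}" and E_card: "card E = t"
    and e_supp: "\<And>i. coeff e i \<noteq> 0 \<longleftrightarrow> i \<in> E"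
    and t_bound: "4 * t \<le> \<delta> + \<nu> - 1"
    and rows_nonempty: "2 * t < \<delta> - 1"
  shows "mat_rank (stacked_hankel
            (\<lambda>j i. poly (map_poly emb e) (\<alpha> powi (f1 + int i * m1 + int j)) *
                   poly (map_poly emb b) (\<beta> powi (f2 + int i * m2 + int j)))
            \<nu> (\<delta> - 1 - 2 * t) (2 * t)) = 2 * t"
proof -
  have e0: "emb 0 = 0" using emb_add[of 0 0] by (metis add.right_neutral add_left_cancel)
  have enz: "emb x \<noteq> 0" if "x \<noteq> 0" for x
    using emb_inj e0 that by (metis injD)
  have a0: "\<alpha> \<noteq> 0" using has_order_nz[OF \<alpha>_ord] .
  have b0: "\<beta> \<noteq> 0" using has_order_nz[OF \<beta>_ord] .
  have finE: "finite E" using E_sub finite_subset by blast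
  obtain l1 l2 where B: "{i. coeff b i \<noteq> 0} = {l1, l2}" and l12: "l1 \<noteq> l2"
    using b_weight unfolding hweight_def by (auto simp: card_2_iff)
  define Bs where "Bs = {l1, l2}"
  have degb: "degree b < nb" using b_code by (simp add: spc_code_def)
  have Bsl: "l < nb" if "l \<in> Bs" for l
  proof -
    have "coeff b l \<noteq> 0" using that B by (auto simp: Bs_def)
    hence "l \<le> degree b" by (rule le_degree)
    thus ?thesis using degb by simp
  qed
  have Bnz: "coeff b l \<noteq> 0" if "l \<in> Bs" for l using that B by (auto simp: Bs_def)
  define K where "K = E \<times> Bs"
  define Z where "Z = (\<lambda>(p::nat, l::nat). \<alpha> powi (m1 * int p) * \<beta> powi (m2 * int l))"
  define w where "w = (\<lambda>(p::nat, l::nat). \<alpha> powi (1 * int p) * \<beta> powi (1 * int l))"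
  define c where "c = (\<lambda>(p::nat, l::nat). emb (coeff e p) * \<alpha> powi (f1 * int p) *
                        (emb (coeff b l) * \<beta> powi (f2 * int l)))"
  have finK: "finite K" using finE by (simp add: K_def Bs_def)
  have cardK: "card K = 2 * t" using E_card l12 finE by (simp add: K_def Bs_def card_cartesian_product)
  have iZ: "inj_on Z K"
  proof (rule inj_onI)
    fix x y assume "x \<in> K" "y \<in> K" "Z x = Z y"
    then obtain p l p' l' where x: "x = (p,l)" and y: "y = (p',l')" and
      pl: "p \<in> E" "l \<in> Bs" "p' \<in> E" "l' \<in> Bs" by (auto simp: K_def)
    have "p = p' \<and> l = l'"
      by (rule sep[OF \<alpha>_ord \<beta>_ord coprime_n gcd_m1 gcd_m2])
        (use pl E_sub Bsl \<open>Z x = Z y\<close> in \<open>auto simp: x y Z_def\<close>)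
    thus "x = y" using x y by simp
  qed
  have iw: "inj_on w K"
  proof (rule inj_onI)
    fix x y assume "x \<in> K" "y \<in> K" "w x = w y"
    then obtain p l p' l' where x: "x = (p,l)" and y: "y = (p',l')" and
      pl: "p \<in> E" "l \<in> Bs" "p' \<in> E" "l' \<in> Bs" by (auto simp: K_def)
    have "p = p' \<and> l = l'"
      by (rule sep[OF \<alpha>_ord \<beta>_ord coprime_n, of 1 1])
        (use pl E_sub Bsl \<open>w x = w y\<close> in \<open>auto simp: x y w_def\<close>)
    thus "x = y" using x y by simp
  qed
  have cnz: "c k \<noteq> 0" if kK: "k \<in> K" for k
  proof -
    obtain p l where k: "k = (p,l)" "p \<in> E" "l \<in> Bs" using kK unfolding K_def by blast
    have "coeff e p \<noteq> 0" using e_supp k by simp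
    thus ?thesis using k Bnz enz a0 b0 by (simp add: c_def power_int_not_zero)
  qed
  define Syn where "Syn = (\<lambda>j i. poly (map_poly emb e) (\<alpha> powi (f1 + int i * m1 + int j)) *
                   poly (map_poly emb b) (\<beta> powi (f2 + int i * m2 + int j)))"
  have SynEq: "Syn j i = (\<Sum>k\<in>K. c k * w k ^ j * Z k ^ i)" for j i
  proof -
    have pe: "poly (map_poly emb e) y = (\<Sum>p\<in>E. emb (coeff e p) * y ^ p)" for y
      by (rule poly_map_sum[where emb=emb, OF e0 finE]) (use e_supp in auto)
    have pb: "poly (map_poly emb b) y = (\<Sum>l\<in>Bs. emb (coeff b l) * y ^ l)" for y
      by (rule poly_map_sum[where emb=emb, OF e0]) (use B in \<open>auto simp: Bs_def\<close>)
    have "Syn j i = (\<Sum>p\<in>E. \<Sum>l\<in>Bs. emb (coeff e p) * (\<alpha> powi (f1 + int i * m1 + int j)) ^ p *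
                        (emb (coeff b l) * (\<beta> powi (f2 + int i * m2 + int j)) ^ l))"
      by (simp add: Syn_def pe pb sum_product)
    also have "\<dots> = (\<Sum>(p,l)\<in>K. emb (coeff e p) * (\<alpha> powi (f1 + int i * m1 + int j)) ^ p *
                        (emb (coeff b l) * (\<beta> powi (f2 + int i * m2 + int j)) ^ l))"
      by (simp add: K_def sum.cartesian_product)
    also have "\<dots> = (\<Sum>k\<in>K. c k * w k ^ j * Z k ^ i)"
    proof (rule sum.cong)
      fix k assume "k \<in> K"
      obtain p l where k: "k = (p,l)" by fastforce
      show "(case k of (p,l) \<Rightarrow> emb (coeff e p) * (\<alpha> powi (f1 + int i * m1 + int j)) ^ p *
                        (emb (coeff b l) * (\<beta> powi (f2 + int i * m2 + int j)) ^ l))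
            = c k * w k ^ j * Z k ^ i"
        unfolding k powi_split[OF a0] powi_split[OF b0]
        by (simp add: c_def w_def Z_def power_mult_distrib mult_ac)
    qed simp
    finally show ?thesis .
  qed
  have L1: "1 \<le> \<delta> - 1 - 2 * t" using rows_nonempty by simp
  have NL: "2 * t \<le> (\<delta> - 1 - 2 * t) + \<nu>" using t_bound rows_nonempty by simp
  have "mat_rank (stacked_hankel Syn \<nu> (\<delta> - 1 - 2 * t) (2 * t)) = 2 * t"
    by (rule main_abstract[OF finK iZ iw cardK NL L1 cnz SynEq])
  thus ?thesis by (simp add: Syn_def)
qed


end
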